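(* Let $f:\mathbb{N}\to[0,\infty)$ be weakly super-multiplicative with normal order $g:(0,\infty)\to(0,\infty)$, where $g$ is either non-decreasing or $\log$-uniformly continuous. Then for every $n\in\mathbb{N}$ and every $\epsilon>0$ there exist $\gamma$ with $0<\gamma\le\epsilon$ and $x_0>0$ such that for all real $x>x_0$, \[ g\big(n(1+\gamma)x\big)\;\ge\;(1-5\epsilon)\,f(n)\,g(x). \]
   Context: A function $f:\mathbb{N}\to[0,\infty)$ is weakly super-multiplicative if for all $n\in\mathbb{N}$ and all $\epsilon>0$ there exist $x_0>0$ and $\delta>0$ such that for all real $x>x_0$, $\#\{m\in\mathbb{N}\cap[x,(1+\epsilon)x]: f(nm)\ge(1-\epsilon)f(n)f(m)\}\ge\delta x$. A function $f:\mathbb{N}\to[0,\infty)$ has normal order $g$ if for every $\epsilon>0$ the set $\{n\in\mathbb{N}: |f(n)-g(n)|\ge\epsilon g(n)\}$ has upper (natural) density $0$. A function $g:(0,\infty)\to(0,\infty)$ is $\log$-uniformly continuous if for every $\epsilon>0$ there is $\delta>0$ such that for all $x,y>0$ with $|x/y-1|<\delta$ we have $|g(x)/g(y)-1|<\epsilon$. *)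

theory Defs
  imports "HOL-Analysis.Analysis"
begin

text \<open>Convention: the natural numbers are the positive integers 1,2,3,...;
  f is a function on type nat whose value at 0 is irrelevant.\<close>

definition weakly_super_multiplicative :: "(nat \<Rightarrow> real) \<Rightarrow> bool" where
  "weakly_super_multiplicative f \<longleftrightarrow>
     (\<forall>n::nat. n \<ge> 1 \<longrightarrow> (\<forall>\<epsilon>::real. \<epsilon> > 0 \<longrightarrow>
        (\<exists>x0::real. x0 > 0 \<and> (\<exists>\<delta>::real. \<delta> > 0 \<and>
           (\<forall>x::real. x > x0 \<longrightarrow>
              real (card {m::nat. m \<ge> 1 \<and> x \<le> real m \<and> real m \<le> (1 + \<epsilon>) * x
                           \<and> f (n * m) \<ge> (1 - \<epsilon>) * f n * f m}) \<ge> \<delta> * x)))))"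

definition upper_density :: "nat set \<Rightarrow> ereal" where
  "upper_density S = limsup (\<lambda>N::nat. ereal (real (card {k \<in> S. 1 \<le> k \<and> k \<le> N}) / real N))"

definition has_normal_order :: "(nat \<Rightarrow> real) \<Rightarrow> (real \<Rightarrow> real) \<Rightarrow> bool" where
  "has_normal_order f g \<longleftrightarrow>
     (\<forall>\<epsilon>::real. \<epsilon> > 0 \<longrightarrow>
        upper_density {n::nat. n \<ge> 1 \<and> \<bar>f n - g (real n)\<bar> \<ge> \<epsilon> * g (real n)} = 0)"

definition log_uniformly_continuous :: "(real \<Rightarrow> real) \<Rightarrow> bool" where
  "log_uniformly_continuous g \<longleftrightarrow>
     (\<forall>\<epsilon>::real. \<epsilon> > 0 \<longrightarrow> (\<exists>\<delta>::real. \<delta> > 0 \<and>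
        (\<forall>x y::real. x > 0 \<longrightarrow> y > 0 \<longrightarrow> \<bar>x / y - 1\<bar> < \<delta> \<longrightarrow> \<bar>g x / g y - 1\<bar> < \<epsilon>)))"

end

theory Submission
  imports Defs
begin

lemma dens_bound:
  assumes "upper_density S = 0" and "c > 0"
  shows "\<exists>N0. \<forall>N\<ge>N0. real (card {k\<in>S. 1 \<le> k \<and> k \<le> N}) \<le> c * real N"
proof -
  have "eventually (\<lambda>N. ereal (real (card {k \<in> S. 1 \<le> k \<and> k \<le> N}) / real N) < ereal c) sequentially"
    apply (rule Limsup_lessD)
    using assms unfolding upper_density_def by simp
  then obtain N0 where N0: "\<And>N. N \<ge> N0 \<Longrightarrow> real (card {k \<in> S. 1 \<le> k \<and> k \<le> N}) / real N < c"
    unfolding eventually_sequentially by auto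
  show ?thesis
  proof (intro exI allI impI)
    fix N assume "N \<ge> N0"
    show "real (card {k\<in>S. 1 \<le> k \<and> k \<le> N}) \<le> c * real N"
    proof (cases "N = 0")
      case True
      then have "{k\<in>S. 1 \<le> k \<and> k \<le> N} = {}" by auto
      then show ?thesis using True by simp
    next
      case False
      then have "real N > 0" by simp
      with N0[OF \<open>N \<ge> N0\<close>] show ?thesis by (simp add: divide_less_eq)
    qed
  qed
qed

lemma core:
  fixes f :: "nat \<Rightarrow> real" and g :: "real \<Rightarrow> real"
  assumes f_nonneg: "\<And>n. n \<ge> 1 \<Longrightarrow> f n \<ge> 0"
    and g_pos: "\<And>x. x > 0 \<Longrightarrow> g x > 0"
    and wsm: "weakly_super_multiplicative f"
    and normal: "has_normal_order f g"
    and n: "n \<ge> 1" and e: "e > 0" "e < 1" and eta: "\<eta> > 0" "\<eta> < 1"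
  shows "\<exists>x0>0. \<forall>x>x0. \<exists>m::nat. m \<ge> 1 \<and> x \<le> real m \<and> real m \<le> (1 + e) * x \<and>
            (1 + \<eta>) * g (real n * real m) \<ge> (1 - e) * (1 - \<eta>) * f n * g (real m)"
proof -
  obtain x1 \<delta> where x1: "x1 > 0" and d: "\<delta> > 0" and
    W: "\<And>x. x > x1 \<Longrightarrow> real (card {m::nat. m \<ge> 1 \<and> x \<le> real m \<and> real m \<le> (1 + e) * x
                           \<and> f (n * m) \<ge> (1 - e) * f n * f m}) \<ge> \<delta> * x"
    using wsm n e unfolding weakly_super_multiplicative_def by blast
  define E where "E = {k::nat. k \<ge> 1 \<and> \<bar>f k - g (real k)\<bar> \<ge> \<eta> * g (real k)}"
  have dE: "upper_density E = 0" using normal eta unfolding has_normal_order_def E_def by blast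
  define c where "c = \<delta> / (2 * (1 + e) * (real n + 1))"
  have c: "c > 0" using d e unfolding c_def by simp
  obtain N0 where N0: "\<And>N. N \<ge> N0 \<Longrightarrow> real (card {k\<in>E. 1 \<le> k \<and> k \<le> N}) \<le> c * real N"
    using dens_bound[OF dE c] by blast
  define x0 where "x0 = max x1 (real N0 + 1)"
  show ?thesis
  proof (intro exI[of _ x0] conjI allI impI)
    show "x0 > 0" using x1 unfolding x0_def by simp
    fix x assume xx: "x > x0"
    have x0: "x > 0" "x > x1" "x > real N0 + 1" using xx x1 unfolding x0_def by auto
    define N where "N = nat \<lfloor>(1 + e) * x\<rfloor>"
    have fl0: "\<lfloor>(1 + e) * x\<rfloor> \<ge> 0" using x0 e by simp
    have NN: "real N \<le> (1 + e) * x"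
    proof -
      have "real N = real_of_int \<lfloor>(1 + e) * x\<rfloor>" unfolding N_def using fl0 by simp
      also have "\<dots> \<le> (1 + e) * x" by (rule of_int_floor_le)
      finally show ?thesis .
    qed
    have NN0: "N \<ge> N0"
    proof -
      have "real N0 \<le> (1 + e) * x" using x0 e by (smt (verit) mult_left_mono mult_less_cancel_right2)
      then show ?thesis unfolding N_def by (simp add: le_nat_floor)
    qed
    define A where "A = {m::nat. m \<ge> 1 \<and> x \<le> real m \<and> real m \<le> (1 + e) * x
                           \<and> f (n * m) \<ge> (1 - e) * f n * f m}"
    have cardA: "real (card A) \<ge> \<delta> * x" using W[OF x0(2)] unfolding A_def .
    have AN: "A \<subseteq> {1..N}"
    proof
      fix m assume "m \<in> A"
      then have "m \<ge> 1" "real m \<le> (1 + e) * x" unfolding A_def by auto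
      then show "m \<in> {1..N}" unfolding N_def by (simp add: le_nat_floor)
    qed
    have finA: "finite A" using AN finite_subset by blast
    define B where "B = {m\<in>A. m \<in> E}"
    define C where "C = {m\<in>A. n * m \<in> E}"
    have "B \<subseteq> {k\<in>E. 1 \<le> k \<and> k \<le> N}" using AN unfolding B_def by auto
    then have "card B \<le> card {k\<in>E. 1 \<le> k \<and> k \<le> N}" by (intro card_mono) auto
    then have cB: "real (card B) \<le> c * ((1 + e) * x)"
      proof -
      have "real (card B) \<le> c * real N" using N0[OF NN0] \<open>card B \<le> _\<close> by (meson of_nat_le_iff order_trans)
      also have "\<dots> \<le> c * ((1 + e) * x)" using NN c by (simp add: mult_left_mono)
      finally show ?thesis .
    qed
    have inj: "inj_on ((*) n) C" using n unfolding inj_on_def by auto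
    have "(*) n ` C \<subseteq> {k\<in>E. 1 \<le> k \<and> k \<le> n * N}" using AN n unfolding C_def by auto
    then have "card ((*) n ` C) \<le> card {k\<in>E. 1 \<le> k \<and> k \<le> n * N}" by (intro card_mono) auto
    then have "card C \<le> card {k\<in>E. 1 \<le> k \<and> k \<le> n * N}" using card_image[OF inj] by simp
    moreover have "n * N \<ge> N0" proof -
      have "N \<le> n * N" using n by simp
      then show ?thesis using NN0 by linarith
    qed
    ultimately have "real (card C) \<le> c * real (n * N)"
      using N0 by (meson of_nat_le_iff order_trans)
    also have "\<dots> \<le> c * (real n * ((1 + e) * x))"
      using NN c by (simp add: mult_left_mono)
    finally have cC: "real (card C) \<le> c * (real n * ((1 + e) * x))" .
    have "c * ((1 + e) * x) + c * (real n * ((1 + e) * x)) = \<delta> * x / 2"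
    proof -
      have nz: "2 * (1 + e) * (real n + 1) \<noteq> 0" using e by simp
      have "c * ((1 + e) * x) + c * (real n * ((1 + e) * x)) = c * (2 * (1 + e) * (real n + 1)) * x / 2"
        by (simp add: algebra_simps)
      also have "c * (2 * (1 + e) * (real n + 1)) = \<delta>" unfolding c_def using nz by simp
      finally show ?thesis .
    qed
    then have sum: "real (card B) + real (card C) < real (card A)"
      proof -
      have "\<delta> * x / 2 < \<delta> * x" using d x0 by simp
      then show ?thesis using cB cC cardA \<open>_ = \<delta> * x / 2\<close> by linarith
    qed
    have "\<not> A \<subseteq> B \<union> C"
    proof
      assume "A \<subseteq> B \<union> C"
      then have "card A \<le> card (B \<union> C)" using finA B_def C_def by (intro card_mono) auto
      also have "\<dots> \<le> card B + card C" by (rule card_Un_le)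
      finally show False using sum by linarith
    qed
    then obtain m where mA: "m \<in> A" and mB: "m \<notin> E" and mC: "n * m \<notin> E"
      unfolding B_def C_def by auto
    have m1: "m \<ge> 1" "x \<le> real m" "real m \<le> (1 + e) * x" and fm: "f (n * m) \<ge> (1 - e) * f n * f m"
      using mA unfolding A_def by auto
    have nm1: "n * m \<ge> 1" using n m1 by simp
    have h1: "f m > (1 - \<eta>) * g (real m)" using mB m1 unfolding E_def by (auto simp: algebra_simps abs_if split: if_splits)
    have h2: "f (n * m) < (1 + \<eta>) * g (real n * real m)" using mC nm1 unfolding E_def by (auto simp: algebra_simps abs_if split: if_splits)
    have fn: "(1 - e) * f n \<ge> 0" using f_nonneg[OF n] e by simp
    have "(1 - e) * f n * ((1 - \<eta>) * g (real m)) \<le> (1 - e) * f n * f m"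
      using h1 fn by (intro mult_left_mono) auto
    then have "(1 - e) * (1 - \<eta>) * f n * g (real m) \<le> (1 + \<eta>) * g (real n * real m)"
      using fm h2 by (simp add: algebra_simps)
    then show "\<exists>m::nat. m \<ge> 1 \<and> x \<le> real m \<and> real m \<le> (1 + e) * x \<and>
            (1 + \<eta>) * g (real n * real m) \<ge> (1 - e) * (1 - \<eta>) * f n * g (real m)"
      using m1 by blast
  qed
qed

lemma alg1:
  fixes e G F :: real
  assumes "0 < e" "e < 1/5" "F \<ge> 0" "(1 + e) * G \<ge> (1 - e) * (1 - e) * F"
  shows "G \<ge> (1 - 5 * e) * F"
proof -
  have "(1 - e) * (1 - e) * F \<ge> (1 + e) * ((1 - 5 * e) * F)"
  proof -
    have "(1 - e) * (1 - e) \<ge> (1 + e) * (1 - 5 * e)" using assms by (simp add: algebra_simps power2_eq_square)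
    then show ?thesis using assms(3) by (metis mult.assoc mult_right_mono)
  qed
  then have "(1 + e) * G \<ge> (1 + e) * ((1 - 5 * e) * F)" using assms(4) by linarith
  then show ?thesis using assms(1) by simp
qed

lemma alg2:
  fixes e G F :: real
  assumes "0 < e" "e < 1/5" "F \<ge> 0" "(1 + e) * (1 + e) * G \<ge> (1 - e) * (1 - e) * (1 - e) * F"
  shows "G \<ge> (1 - 5 * e) * F"
proof -
  have "(1 - e) * (1 - e) * (1 - e) * F \<ge> ((1 + e) * (1 + e)) * ((1 - 5 * e) * F)"
  proof -
    have "(1 - e) * (1 - e) * (1 - e) \<ge> (1 + e) * (1 + e) * (1 - 5 * e)"
    proof -
      have "(1 - e) * (1 - e) * (1 - e) - (1 + e) * (1 + e) * (1 - 5 * e) = 12 * e * e + 4 * e * e * e"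
        by (simp add: algebra_simps)
      moreover have "12 * e * e + 4 * e * e * e \<ge> 0" using assms(1) by simp
      ultimately show ?thesis by linarith
    qed
    then show ?thesis using assms(3) by (metis mult.assoc mult_right_mono)
  qed
  then have "((1 + e) * (1 + e)) * G \<ge> ((1 + e) * (1 + e)) * ((1 - 5 * e) * F)" using assms(4) by linarith
  moreover have "(1 + e) * (1 + e) > 0" using assms(1) by simp
  ultimately show ?thesis using mult_le_cancel_left_pos by blast
qed

theorem mainTheorem2:
  fixes f :: "nat \<Rightarrow> real" and g :: "real \<Rightarrow> real"
  assumes f_nonneg: "\<And>n. n \<ge> 1 \<Longrightarrow> f n \<ge> 0"
    and g_pos: "\<And>x. x > 0 \<Longrightarrow> g x > 0"
    and wsm: "weakly_super_multiplicative f"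
    and normal: "has_normal_order f g"
    and g_reg: "mono_on {0<..} g \<or> log_uniformly_continuous g"
  shows "\<forall>n::nat. n \<ge> 1 \<longrightarrow> (\<forall>\<epsilon>::real. \<epsilon> > 0 \<longrightarrow>
           (\<exists>\<gamma>::real. 0 < \<gamma> \<and> \<gamma> \<le> \<epsilon> \<and> (\<exists>x0::real. x0 > 0 \<and>
              (\<forall>x::real. x > x0 \<longrightarrow>
                 g (real n * (1 + \<gamma>) * x) \<ge> (1 - 5 * \<epsilon>) * f n * g x))))"
proof (intro allI impI)
  fix n :: nat and \<epsilon> :: real
  assume n: "n \<ge> 1" and ep: "\<epsilon> > 0"
  have fn: "f n \<ge> 0" using f_nonneg[OF n] .
  show "\<exists>\<gamma>::real. 0 < \<gamma> \<and> \<gamma> \<le> \<epsilon> \<and> (\<exists>x0::real. x0 > 0 \<and>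
              (\<forall>x::real. x > x0 \<longrightarrow>
                 g (real n * (1 + \<gamma>) * x) \<ge> (1 - 5 * \<epsilon>) * f n * g x))"
  proof (cases "\<epsilon> < 1/5")
    case False
    show ?thesis
    proof (intro exI conjI allI impI)
      show "0 < \<epsilon>" "\<epsilon> \<le> \<epsilon>" "(1::real) > 0" using ep by auto
      fix x :: real assume "x > 1"
      have "g (real n * (1 + \<epsilon>) * x) > 0" using n ep \<open>x > 1\<close> by (intro g_pos) simp
      moreover have "(1 - 5 * \<epsilon>) * f n * g x \<le> 0"
        using False fn g_pos[of x] \<open>x > 1\<close>
        by (intro mult_nonpos_nonneg mult_nonpos_nonneg) auto
      ultimately show "g (real n * (1 + \<epsilon>) * x) \<ge> (1 - 5 * \<epsilon>) * f n * g x" by linarith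
    qed
  next
    case small: True
    show ?thesis
      using g_reg
    proof
      assume mono: "mono_on {0<..} g"
      obtain x0 where x0: "x0 > 0" and H: "\<And>x. x > x0 \<Longrightarrow> \<exists>m::nat. m \<ge> 1 \<and> x \<le> real m \<and> real m \<le> (1 + \<epsilon>) * x \<and>
            (1 + \<epsilon>) * g (real n * real m) \<ge> (1 - \<epsilon>) * (1 - \<epsilon>) * f n * g (real m)"
      proof -
        have e1: "\<epsilon> < 1" using small by simp
        show ?thesis using core[OF f_nonneg g_pos wsm normal n ep e1 ep e1] that by blast
      qed
      show ?thesis
      proof (intro exI conjI allI impI)
        show "0 < \<epsilon>" "\<epsilon> \<le> \<epsilon>" "x0 > 0" using ep x0 by auto
        fix x :: real assume xx: "x > x0"
        then obtain m :: nat where m: "x \<le> real m" "real m \<le> (1 + \<epsilon>) * x"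
          and mm: "(1 + \<epsilon>) * g (real n * real m) \<ge> (1 - \<epsilon>) * (1 - \<epsilon>) * f n * g (real m)"
          using H by blast
        have xp: "x > 0" using xx x0 by simp
        have "g x \<le> g (real m)" using mono m xp by (intro mono_onD[OF mono]) auto
        have "g (real n * real m) \<le> g (real n * (1 + \<epsilon>) * x)"
          using n m xp by (intro mono_onD[OF mono]) (auto simp: mult.assoc intro: mult_left_mono)
        have c1: "(1 - \<epsilon>) * (1 - \<epsilon>) * f n * g x \<le> (1 - \<epsilon>) * (1 - \<epsilon>) * f n * g (real m)"
          using \<open>g x \<le> g (real m)\<close> fn by (intro mult_left_mono) auto
        have c2: "(1 + \<epsilon>) * g (real n * real m) \<le> (1 + \<epsilon>) * g (real n * (1 + \<epsilon>) * x)"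
          using \<open>g (real n * real m) \<le> _\<close> ep by simp
        have "(1 + \<epsilon>) * g (real n * (1 + \<epsilon>) * x) \<ge> (1 - \<epsilon>) * (1 - \<epsilon>) * (f n * g x)"
          using c1 c2 mm by (simp add: mult.assoc)
        from alg1[OF ep small _ this] show "g (real n * (1 + \<epsilon>) * x) \<ge> (1 - 5 * \<epsilon>) * f n * g x"
          using fn g_pos[OF xp] by (simp add: mult.assoc)
      qed
    next
      assume luc: "log_uniformly_continuous g"
      obtain d where d: "d > 0" and D: "\<And>x y. x > 0 \<Longrightarrow> y > 0 \<Longrightarrow> \<bar>x / y - 1\<bar> < d \<Longrightarrow> \<bar>g x / g y - 1\<bar> < \<epsilon>"
        using luc ep unfolding log_uniformly_continuous_def by blast
      define \<gamma> where "\<gamma> = min \<epsilon> (d / 2)"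
      have ga: "\<gamma> > 0" "\<gamma> \<le> \<epsilon>" "\<gamma> < d" "\<gamma> < 1" using ep d small unfolding \<gamma>_def by auto
      obtain x0 where x0: "x0 > 0" and H: "\<And>x. x > x0 \<Longrightarrow> \<exists>m::nat. m \<ge> 1 \<and> x \<le> real m \<and> real m \<le> (1 + \<gamma>) * x \<and>
            (1 + \<epsilon>) * g (real n * real m) \<ge> (1 - \<gamma>) * (1 - \<epsilon>) * f n * g (real m)"
      proof -
        have e1: "\<epsilon> < 1" using small by simp
        show ?thesis using core[OF f_nonneg g_pos wsm normal n ga(1) ga(4) ep e1] that by blast
      qed
      show ?thesis
      proof (rule exI[of _ \<gamma>], intro conjI exI[of _ x0] allI impI)
        show "0 < \<gamma>" "\<gamma> \<le> \<epsilon>" "x0 > 0" using ga x0 by auto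
        fix x :: real assume xx: "x > x0"
        then obtain m :: nat where m: "x \<le> real m" "real m \<le> (1 + \<gamma>) * x"
          and mm: "(1 + \<epsilon>) * g (real n * real m) \<ge> (1 - \<gamma>) * (1 - \<epsilon>) * f n * g (real m)"
          using H by blast
        have xp: "x > 0" using xx x0 by simp
        have mp: "real m > 0" using xp m by simp
        have np: "real n > 0" using n by simp
        define y where "y = real n * (1 + \<gamma>) * x"
        have yp: "y > 0" unfolding y_def using np ga xp by simp
        have r1: "\<bar>real m / x - 1\<bar> < d"
        proof -
          have "real m / x \<ge> 1" using m xp by simp
          moreover have "real m / x \<le> 1 + \<gamma>" using m xp by (simp add: divide_le_eq)
          ultimately show ?thesis using ga by simp
        qed
        have g1: "g (real m) \<ge> (1 - \<epsilon>) * g x"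
        proof -
          have "\<bar>g (real m) / g x - 1\<bar> < \<epsilon>" using D[OF mp xp r1] .
          then have "g (real m) / g x > 1 - \<epsilon>" by simp
          then show ?thesis using g_pos[OF xp] by (simp add: less_divide_eq)
        qed
        have r2: "\<bar>(real n * real m) / y - 1\<bar> < d"
        proof -
          have q: "(real n * real m) / y = real m / ((1 + \<gamma>) * x)" unfolding y_def using np by simp
          have "real m / ((1 + \<gamma>) * x) \<le> 1" using m xp ga by simp
          moreover have "real m / ((1 + \<gamma>) * x) \<ge> 1 - \<gamma>"
          proof -
            have "(1 - \<gamma>) * ((1 + \<gamma>) * x) \<le> x"
            proof -
              have "(1 - \<gamma>) * ((1 + \<gamma>) * x) = x - \<gamma> * \<gamma> * x" by (simp add: algebra_simps)
              moreover have "\<gamma> * \<gamma> * x \<ge> 0" using xp by simp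
              ultimately show ?thesis by linarith
            qed
            then have "(1 - \<gamma>) * ((1 + \<gamma>) * x) \<le> real m" using m by linarith
            then show ?thesis using xp ga by (simp add: le_divide_eq)
          qed
          ultimately show ?thesis using ga q by simp
        qed
        have g2: "g (real n * real m) \<le> (1 + \<epsilon>) * g y"
        proof -
          have "\<bar>g (real n * real m) / g y - 1\<bar> < \<epsilon>" using D[OF _ yp r2] np mp by simp
          then have "g (real n * real m) / g y < 1 + \<epsilon>" by simp
          then show ?thesis using g_pos[OF yp] by (simp add: divide_less_eq)
        qed
        have fg: "f n * g x \<ge> 0" using fn g_pos[OF xp] by simp
        have "(1 - \<epsilon>) * (1 - \<epsilon>) * (1 - \<epsilon>) * (f n * g x) \<le> (1 - \<gamma>) * (1 - \<epsilon>) * f n * g (real m)"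
        proof -
          have e1: "1 - \<epsilon> \<ge> 0" "1 - \<gamma> \<ge> 0" using small ga by auto
          have a: "(1 - \<epsilon>) * (f n * g x) \<ge> 0" using e1 fg by simp
          have "(1 - \<epsilon>) * (1 - \<epsilon>) * ((1 - \<epsilon>) * (f n * g x)) \<le> (1 - \<gamma>) * (1 - \<epsilon>) * ((1 - \<epsilon>) * (f n * g x))"
            using a e1 ga by (intro mult_right_mono mult_right_mono) auto
          also have "\<dots> \<le> (1 - \<gamma>) * (1 - \<epsilon>) * (f n * g (real m))"
          proof (rule mult_left_mono)
            show "(1 - \<epsilon>) * (f n * g x) \<le> f n * g (real m)"
              using mult_left_mono[OF g1 fn] by (simp add: algebra_simps)
            show "0 \<le> (1 - \<gamma>) * (1 - \<epsilon>)" using e1 by simp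
          qed
          finally show ?thesis by (simp add: mult.assoc)
        qed
        also have "\<dots> \<le> (1 + \<epsilon>) * g (real n * real m)" using mm .
        also have "\<dots> \<le> (1 + \<epsilon>) * ((1 + \<epsilon>) * g y)" using g2 ep by simp
        finally have "(1 + \<epsilon>) * (1 + \<epsilon>) * g y \<ge> (1 - \<epsilon>) * (1 - \<epsilon>) * (1 - \<epsilon>) * (f n * g x)"
          by (simp add: mult.assoc)
        from alg2[OF ep small fg this] show "g (real n * (1 + \<gamma>) * x) \<ge> (1 - 5 * \<epsilon>) * f n * g x"
          unfolding y_def by (simp add: mult.assoc)
      qed
    qed
  qed
qed

end
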